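(* Let $G$ be a finite simple graph with ${\rm diam}(G)=k$, and let $e$ be an edge of $G$ such that ${\rm diam}(G-e) > k$. Let $u, v$ be two vertices of $G$ with $d_{G-e}(u,v)>k$. If there exists a $\chi_\rho(G)$-packing coloring $c$ of $G$ such that $c(v)>c(u) \geq k$, then $\chi_\rho(G-e) < \chi_\rho(G)$.
   Context: A $k$-packing coloring of a graph $G$ is a map $c:V(G)\to\{1,\ldots,k\}$ such that two distinct vertices $u,v$ with $c(u)=c(v)=i$ satisfy $d_G(u,v)>i$ (distance between vertices in different components is infinite). The packing chromatic number $\chi_\rho(G)$ is the smallest $k$ for which $G$ admits a $k$-packing coloring. ${\rm diam}$ denotes the diameter (maximum distance between two vertices, infinite if disconnected); $G-e$ is $G$ with the edge $e$ deleted. *)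

theory Defs
  imports Main "HOL-Library.Extended_Nat"
begin

definition simple_graph :: "'a set \<Rightarrow> 'a set set \<Rightarrow> bool" where
  "simple_graph V E \<longleftrightarrow> finite V \<and> (\<forall>e\<in>E. e \<subseteq> V \<and> card e = 2)"

definition walk :: "'a set \<Rightarrow> 'a set set \<Rightarrow> 'a \<Rightarrow> 'a \<Rightarrow> nat \<Rightarrow> bool" where
  "walk V E u v n \<longleftrightarrow> (\<exists>p. p 0 = u \<and> p n = v \<and> (\<forall>i\<le>n. p i \<in> V) \<and>
                               (\<forall>i<n. {p i, p (Suc i)} \<in> E))"

definition gdist :: "'a set \<Rightarrow> 'a set set \<Rightarrow> 'a \<Rightarrow> 'a \<Rightarrow> enat" where
  "gdist V E u v = (if \<exists>n. walk V E u v n then enat (LEAST n. walk V E u v n) else \<infinity>)"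

definition diam :: "'a set \<Rightarrow> 'a set set \<Rightarrow> enat" where
  "diam V E = (SUP u\<in>V. SUP v\<in>V. gdist V E u v)"

definition packing_coloring :: "'a set \<Rightarrow> 'a set set \<Rightarrow> nat \<Rightarrow> ('a \<Rightarrow> nat) \<Rightarrow> bool" where
  "packing_coloring V E k c \<longleftrightarrow>
     (\<forall>x\<in>V. c x \<in> {1..k}) \<and>
     (\<forall>x\<in>V. \<forall>y\<in>V. x \<noteq> y \<and> c x = c y \<longrightarrow> gdist V E x y > enat (c x))"

definition packing_chromatic :: "'a set \<Rightarrow> 'a set set \<Rightarrow> nat" where
  "packing_chromatic V E = (LEAST k. \<exists>c. packing_coloring V E k c)"

end

theory Submission
  imports Defs
begin

lemma gdist_le_diam:
  assumes "x \<in> V" "y \<in> V" shows "gdist V E x y \<le> diam V E"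
  unfolding diam_def using assms
  by (meson SUP_upper order_trans)

lemma walk_mono: "walk V (E - A) x y n \<Longrightarrow> walk V E x y n"
  unfolding walk_def by blast

lemma gdist_mono: "gdist V E x y \<le> gdist V (E - A) x y"
proof (cases "\<exists>n. walk V (E - A) x y n")
  case True
  then obtain n where n: "walk V (E - A) x y n" by blast
  hence w: "walk V E x y n" by (rule walk_mono)
  have "(LEAST n. walk V E x y n) \<le> (LEAST n. walk V (E - A) x y n)"
    using LeastI_ex[OF True] walk_mono by (metis Least_le)
  then show ?thesis unfolding gdist_def using True w by auto
next
  case False
  then have "gdist V (E - A) x y = \<infinity>" unfolding gdist_def by simp
  then show ?thesis by simp
qed

lemma walk_rev: "walk V E x y n \<Longrightarrow> walk V E y x n"
proof -
  assume "walk V E x y n"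
  then obtain p where p: "p 0 = x" "p n = y" "\<forall>i\<le>n. p i \<in> V" "\<forall>i<n. {p i, p (Suc i)} \<in> E"
    unfolding walk_def by blast
  define q where "q i = p (n - i)" for i
  have "q 0 = y" "q n = x" using p by (auto simp: q_def)
  moreover have "\<forall>i\<le>n. q i \<in> V" using p by (auto simp: q_def)
  moreover have "\<forall>i<n. {q i, q (Suc i)} \<in> E"
  proof (intro allI impI)
    fix i assume i: "i < n"
    have "{p (n - Suc i), p (Suc (n - Suc i))} \<in> E" using p i by auto
    moreover have "Suc (n - Suc i) = n - i" using i by simp
    ultimately show "{q i, q (Suc i)} \<in> E" by (simp add: q_def insert_commute)
  qed
  ultimately show ?thesis unfolding walk_def by blast
qed

lemma gdist_sym: "gdist V E x y = gdist V E y x"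
proof -
  have "walk V E x y = walk V E y x" by (rule ext) (meson walk_rev)
  then show ?thesis unfolding gdist_def by simp
qed

lemma gdist_pos: "x \<noteq> y \<Longrightarrow> gdist V E x y \<ge> enat 1"
proof (cases "\<exists>n. walk V E x y n")
  case True
  assume xy: "x \<noteq> y"
  have w: "walk V E x y (LEAST n. walk V E x y n)" using LeastI_ex[OF True] .
  have "(LEAST n. walk V E x y n) \<noteq> 0"
  proof
    assume "(LEAST n. walk V E x y n) = 0"
    with w have "walk V E x y 0" by simp
    then show False using xy unfolding walk_def by auto
  qed
  then show ?thesis unfolding gdist_def using True by (simp add: one_enat_def)
next
  case False
  then have "gdist V E x y = \<infinity>" unfolding gdist_def by simp
  then show ?thesis by simp
qed

theorem lemma2p3:
  fixes V :: "'a set" and E :: "'a set set" and k :: nat and e :: "'a set"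
    and u v :: 'a and c :: "'a \<Rightarrow> nat"
  assumes "simple_graph V E"
    and "diam V E = enat k"
    and "e \<in> E"
    and "diam V (E - {e}) > enat k"
    and "u \<in> V" and "v \<in> V"
    and "gdist V (E - {e}) u v > enat k"
    and "packing_coloring V E (packing_chromatic V E) c"
    and "c v > c u" and "c u \<ge> k"
  shows "packing_chromatic V (E - {e}) < packing_chromatic V E"
proof -
  define \<chi> where "\<chi> = packing_chromatic V E"
  define a where "a = c u"
  define b where "b = c v"
  have col: "\<forall>x\<in>V. c x \<in> {1..\<chi>}" and pk: "\<forall>x\<in>V. \<forall>y\<in>V. x \<noteq> y \<and> c x = c y \<longrightarrow> gdist V E x y > enat (c x)"
    using assms(8) unfolding packing_coloring_def \<chi>_def by auto
  have single: "x = y" if "x \<in> V" "y \<in> V" "c x = c y" "c x \<ge> k" for x y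
  proof (rule ccontr)
    assume "x \<noteq> y"
    then have "gdist V E x y > enat (c x)" using pk that by auto
    moreover have "gdist V E x y \<le> enat k" using gdist_le_diam[OF that(1,2), of E] assms(2) by simp
    ultimately have "enat (c x) < enat k" by (rule less_le_trans)
    then show False using that(4) by simp
  qed
  obtain x0 y0 where e: "e = {x0, y0}" "x0 \<noteq> y0" using assms(1,3) unfolding simple_graph_def
    by (meson card_2_iff)
  have "x0 \<in> V" "y0 \<in> V" using assms(1,3) e unfolding simple_graph_def by auto
  then have "enat 1 \<le> enat k" using gdist_pos[OF e(2), of V E] gdist_le_diam[of x0 V y0 E] assms(2)
    by (metis order_trans)
  then have k1: "k \<ge> 1" by simp
  have uv: "u \<noteq> v" using assms(9) by auto
  define c' where "c' x = (if x = u \<or> x = v then k else if c x = k then a else c x)" for x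
  define d where "d x = (if c' x > b then c' x - 1 else c' x)" for x
  have b_le: "b \<le> \<chi>" "a < b" using col assms(6,9) by (auto simp: a_def b_def)
  have c'b: "c' x \<noteq> b" if "x \<in> V" for x
  proof
    assume h: "c' x = b"
    show False
    proof (cases "x = u \<or> x = v")
      case True then show ?thesis using h b_le assms(10) by (simp add: c'_def a_def)
    next
      case False
      then show ?thesis using h b_le single[OF that assms(6)] assms(10) unfolding c'_def b_def a_def
        by (auto split: if_splits)
    qed
  qed
  have dcol: "d x \<in> {1..\<chi> - 1}" if "x \<in> V" for x
  proof -
    have "c' x \<in> {1..\<chi>}" using col that k1 b_le assms(5,10) by (auto simp: c'_def a_def)
    then show ?thesis using c'b[OF that] b_le unfolding d_def by auto
  qed
  have dinj: "c' x = c' y" if "x \<in> V" "y \<in> V" "d x = d y" for x y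
    using that c'b[OF that(1)] c'b[OF that(2)] unfolding d_def by (auto split: if_splits)
  have dle: "d x \<le> c' x" for x unfolding d_def by auto
  have c'ok: "gdist V (E - {e}) x y > enat (c' x)" if "x \<in> V" "y \<in> V" "x \<noteq> y" "c' x = c' y" for x y
  proof (cases "x = u \<or> x = v")
    case True
    show ?thesis
    proof (cases "y = u \<or> y = v")
      case True
      then have "(x = u \<and> y = v) \<or> (x = v \<and> y = u)" using \<open>x = u \<or> x = v\<close> that(3) by auto
      then show ?thesis using assms(7) gdist_sym[of V "E - {e}" u v] \<open>x = u \<or> x = v\<close>
        by (auto simp: c'_def)
    next
      case False
      then have "c' y = k" using that(4) True by (simp add: c'_def)
      then show ?thesis using False single[OF that(2) assms(5)] assms(10) unfolding c'_def a_def
        by (auto split: if_splits)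
    qed
  next
    case False
    show ?thesis
    proof (cases "y = u \<or> y = v")
      case True
      then have "c' x = k" using that(4) by (simp add: c'_def)
      then show ?thesis using False single[OF that(1) assms(5)] assms(10) unfolding c'_def a_def
        by (auto split: if_splits)
    next
      case F2: False
      have "c x = c y"
        using False F2 that single[OF that(1) assms(5)] single[OF that(2) assms(5)]
          single[OF that(1,2)] assms(10) unfolding c'_def a_def
        by (auto split: if_splits)
      then have "gdist V E x y > enat (c x)" using pk that by auto
      then have "gdist V (E - {e}) x y > enat (c x)" using gdist_mono[of V E x y "{e}"] by auto
      then show ?thesis using False F2 \<open>c x = c y\<close> that single[OF that(1,2)] assms(10)
        unfolding c'_def a_def by (auto split: if_splits)
    qed
  qed
  have "packing_coloring V (E - {e}) (\<chi> - 1) d"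
    unfolding packing_coloring_def
  proof (intro conjI ballI impI)
    fix x assume "x \<in> V" then show "d x \<in> {1..\<chi> - 1}" by (rule dcol)
  next
    fix x y assume xy: "x \<in> V" "y \<in> V" "x \<noteq> y \<and> d x = d y"
    then have "c' x = c' y" using dinj[OF xy(1,2)] by blast
    then have "gdist V (E - {e}) x y > enat (c' x)" using c'ok[OF xy(1,2)] xy(3) by blast
    then show "gdist V (E - {e}) x y > enat (d x)" using dle[of x]
      by (meson enat_ord_simps(1) le_less_trans)
  qed
  then have "packing_chromatic V (E - {e}) \<le> \<chi> - 1"
    unfolding packing_chromatic_def by (intro Least_le) blast
  moreover have "\<chi> \<ge> 1" using b_le by simp
  ultimately have "packing_chromatic V (E - {e}) < \<chi>" by simp
  then show ?thesis by (simp add: \<chi>_def)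
qed

end
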